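(* Let $\Pi$ be a program and $e=(e_{in},e_{out})$ an example with $[\![\Pi]\!]e_{in}\neq e_{out}$, and let $\mathcal{P}\subseteq\mathcal{U}$ be such that $e_{out}\in\gamma(\mathrm{EvalAbstract}(\Pi,e_{in},\mathcal{P}))$. Then the mapping $\mathcal{I}$ returned by $\textsc{ConstructProof}(\Pi,e,\mathcal{P},\mathcal{U})$ is a proof of incorrectness of $\Pi$ with respect to $e$. That is: (1) for every leaf $v$ labelled by terminal $t$, $(t=[\![t]\!]e_{in})\sqsubseteq\mathcal{I}(v)$; (2) for every internal node $v$ labelled $f$ with children $v_1,\dots,v_n$, $[\![f(\mathcal{I}(v_1),\dots,\mathcal{I}(v_n))]\!]^\#\sqsubseteq\mathcal{I}(v)$; (3) $e_{out}\notin\gamma(\mathcal{I}(\mathrm{root}(\Pi)))$.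
   Context: A DSL is given by a context-free grammar $G$ with start symbol $s_0$. Productions have the form $s\to t$, where $t$ is the input variable $x$ or a constant, or $s\to f(s_1,\dots,s_n)$. Programs are finite ASTs derived from $s_0$, and each node carries the grammar symbol it derives from. Concrete semantics: $[\![x]\!]c=c$; $[\![t]\!]$ is the value of constant $t$ (we write $[\![x]\!]e_{in}=e_{in}$); $[\![f(\Pi_1,\dots,\Pi_n)]\!]c=[\![f]\!]([\![\Pi_1]\!]c,\dots,[\![\Pi_n]\!]c)$. A predicate over grammar symbol $s$ is a formula with sole free variable $s$. An abstract value is a conjunction of predicates ($\mathit{true}$ is the empty one), $\gamma(\varphi)$ is its set of satisfying values, and $\varphi\sqsubseteq\varphi'$ iff $\varphi\Rightarrow\varphi'$. $\alpha^{\mathcal{P}}(\varphi)$ is the conjunction of all $p\in\mathcal{P}$ (over the relevant symbol) with $\varphi\Rightarrow p$. $\mathcal{U}$ is the universe of predicates, and an abstract value over $\mathcal{U}$ is a conjunction of predicates from $\mathcal{U}$. It is assumed that $\mathcal{U}$ contains every equality predicate $s=c$. Each $f$ has an abstract transformer $[\![f(\varphi_1,\dots,\varphi_n)]\!]^\#$ satisfying three properties. It is sound: $c_i\in\gamma(\varphi_i)$ implies $[\![f]\!](\vec c)\in\gamma([\![f(\vec\varphi)]\!]^\#)$. It is monotone with respect to $\sqsubseteq$. It is precise on concrete inputs: $[\![f(s_1=c_1,\dots,s_n=c_n)]\!]^\#\sqsubseteq(s=[\![f]\!](c_1,\dots,c_n))$. $\mathrm{EvalAbstract}(\Pi,c,\mathcal{P})$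 is defined recursively: $\alpha^{\mathcal{P}}(x=c)$ for leaf $x$; $\alpha^{\mathcal{P}}(t=[\![t]\!])$ for leaf constant $t$; $\alpha^{\mathcal{P}}([\![f(\mathrm{EvalAbstract}(\Pi_1,c,\mathcal{P}),\dots,\mathrm{EvalAbstract}(\Pi_n,c,\mathcal{P}))]\!]^\#)$ for a node $f(\Pi_1,\dots,\Pi_n)$. A fixed integer $k\ge1$ bounds conjunction lengths. $\mathrm{StrengthenRoot}(p_+,p_-,\varphi,\mathcal{U})$ works as follows. Let $\Phi=\{p\in\mathcal{U}: p_+\Rightarrow p\}$, and let $\Psi$ be the set of conjunctions of at most $k+1$ elements of $\Phi$. Start with $\psi^*:=p_+$. Iterate over $\psi\in\Psi$, replacing $\psi^*$ by $\psi$ whenever $\psi^*\Rightarrow\psi$ and $(\varphi\wedge\psi)\Rightarrow p_-$. Return $\psi^*$. $\mathrm{StrengthenChildren}(\vec\phi,\vec\varphi,\varphi_p,\mathcal{U},f)$ works as follows, with $\vec\phi=(\phi_1,\dots,\phi_n)$ and $\vec\varphi=(\varphi_1,\dots,\varphi_n)$. Let $\Phi_i=\{p\in\mathcal{U}:\phi_i\Rightarrow p\}$, and let $\Psi_i$ be the set of conjunctions of at most $k+1$ elements of $\Phi_i$. Start with $\vec\psi^*:=\vec\phi$. Iterate over all tuples $\vec\psi$ with $\psi_i\in\Psi_i$, replacing $\vec\psi^*$ by $\vec\psi$ whenever $\psi^*_i\Rightarrow\psi_i$ for all $i$ and $[\![f(\varphi_1\wedge\psi_1,\dots,\varphi_n\wedge\psi_n)]\!]^\#\Rightarrow\varphi_p$.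 Return $\vec\psi^*$. $\textsc{ConstructProof}(\Pi,e,\mathcal{P},\mathcal{U})$ works in two phases. First, for the root $r$: let $\varphi=\mathrm{EvalAbstract}(\Pi,e_{in},\mathcal{P})$ and $\psi=\mathrm{StrengthenRoot}(s_0=[\![\Pi]\!]e_{in},\ s_0\neq e_{out},\ \varphi,\ \mathcal{U})$, and set $\mathcal{I}(r)=\varphi\wedge\psi$. Then it processes a worklist initialised to $\{r\}$. While the worklist is nonempty, it removes a node $cur$, labelled $f$, with child subtrees $\Pi_1,\dots,\Pi_n$. It sets $\phi_i=(s_i=[\![\Pi_i]\!]e_{in})$, where $s_i$ is the grammar symbol of the root of $\Pi_i$, and $\varphi_i=\mathrm{EvalAbstract}(\Pi_i,e_{in},\mathcal{P})$. It computes $\vec\psi=\mathrm{StrengthenChildren}(\vec\phi,\vec\varphi,\mathcal{I}(cur),\mathcal{U},f)$ and sets $\mathcal{I}(\mathrm{root}(\Pi_i))=\varphi_i\wedge\psi_i$ for each $i$. Each non-leaf $\mathrm{root}(\Pi_i)$ is added to the worklist. Finally it returns $\mathcal{I}$. *)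

theory Defs
  imports Main
begin

text \<open>Every node carries the grammar symbol it derives from.  Leaves are the
input variable x or a constant t; internal nodes are applications of f.\<close>
datatype ('s,'c,'f) prog =
    Var 's
  | Const 's 'c
  | App 's 'f "('s,'c,'f) prog list"

datatype ('s,'c,'f) production =
    PVar 's
  | PConst 's 'c
  | PApp 's 'f "'s list"

fun sym_of :: "('s,'c,'f) prog \<Rightarrow> 's" where
  "sym_of (Var s) = s"
| "sym_of (Const s t) = s"
| "sym_of (App s f ps) = s"

fun derives :: "('s,'c,'f) production set \<Rightarrow> ('s,'c,'f) prog \<Rightarrow> bool" where
  "derives G (Var s) = (PVar s \<in> G)"
| "derives G (Const s t) = (PConst s t \<in> G)"
| "derives G (App s f ps) =
     (PApp s f (map sym_of ps) \<in> G \<and> list_all (derives G) ps)"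

fun eval :: "('c \<Rightarrow> 'v) \<Rightarrow> ('f \<Rightarrow> 'v list \<Rightarrow> 'v) \<Rightarrow> ('s,'c,'f) prog \<Rightarrow> 'v \<Rightarrow> 'v" where
  "eval cv fs (Var s) c = c"
| "eval cv fs (Const s t) c = cv t"
| "eval cv fs (App s f ps) c = fs f (map (\<lambda>q. eval cv fs q c) ps)"

text \<open>Nodes are identified by their positions (paths of child indices).\<close>
fun subtree :: "('s,'c,'f) prog \<Rightarrow> nat list \<Rightarrow> ('s,'c,'f) prog option" where
  "subtree p [] = Some p"
| "subtree (App s f ps) (i # is) = (if i < length ps then subtree (ps ! i) is else None)"
| "subtree _ _ = None"

text \<open>Predicates are elements of a type 'p; psym p is the grammar symbol the predicate
is over, den p the set of values satisfying it.  An abstract value is a conjunction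
of predicates, represented by the set of its conjuncts (empty set = true).\<close>

definition gam :: "('p \<Rightarrow> 'v set) \<Rightarrow> 'p set \<Rightarrow> 'v set" where
  "gam den \<phi> = {v. \<forall>p\<in>\<phi>. v \<in> den p}"

definition imp :: "('p \<Rightarrow> 'v set) \<Rightarrow> 'p set \<Rightarrow> 'p set \<Rightarrow> bool" where
  "imp den \<phi> \<psi> \<longleftrightarrow> gam den \<phi> \<subseteq> gam den \<psi>"

definition alpha :: "('p \<Rightarrow> 's) \<Rightarrow> ('p \<Rightarrow> 'v set) \<Rightarrow> 'p set \<Rightarrow> 's \<Rightarrow> 'p set \<Rightarrow> 'p set" where
  "alpha psym den P s \<phi> = {p \<in> P. psym p = s \<and> imp den \<phi> {p}}"

text \<open>EvalAbstract; eqp s c is the equality predicate (s = c); absT is the abstract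
transformer.\<close>
fun evalA :: "('p \<Rightarrow> 's) \<Rightarrow> ('p \<Rightarrow> 'v set) \<Rightarrow> ('s \<Rightarrow> 'v \<Rightarrow> 'p) \<Rightarrow> ('c \<Rightarrow> 'v)
    \<Rightarrow> ('f \<Rightarrow> 'p set list \<Rightarrow> 'p set) \<Rightarrow> 'p set \<Rightarrow> ('s,'c,'f) prog \<Rightarrow> 'v \<Rightarrow> 'p set" where
  "evalA psym den eqp cv absT P (Var s) c = alpha psym den P s {eqp s c}"
| "evalA psym den eqp cv absT P (Const s t) c = alpha psym den P s {eqp s (cv t)}"
| "evalA psym den eqp cv absT P (App s f ps) c =
     alpha psym den P s (absT f (map (\<lambda>q. evalA psym den eqp cv absT P q c) ps))"

definition conjs :: "nat \<Rightarrow> 'p set \<Rightarrow> 'p set set" where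
  "conjs k \<Phi> = {S. finite S \<and> S \<subseteq> \<Phi> \<and> card S \<le> k + 1}"

text \<open>res is a possible result of StrengthenRoot(p+, p-, \<phi>, U), for some order of
iteration over \<Psi> (pminus is given by its set of satisfying values).\<close>
definition strengthen_root_result ::
  "('p \<Rightarrow> 's) \<Rightarrow> ('p \<Rightarrow> 'v set) \<Rightarrow> 'p set \<Rightarrow> nat \<Rightarrow> 'p \<Rightarrow> 'v set \<Rightarrow> 'p set \<Rightarrow> 'p set \<Rightarrow> bool" where
  "strengthen_root_result psym den U k pplus pminus \<phi> res \<longleftrightarrow>
     (\<exists>L. distinct L \<and>
          set L = conjs k {p \<in> U. psym p = psym pplus \<and> imp den {pplus} {p}} \<and>
          res = fold (\<lambda>\<psi> acc. if imp den acc \<psi> \<and> gam den (\<phi> \<union> \<psi>) \<subseteq> pminus then \<psi> else acc)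
                     L {pplus})"

text \<open>res is a possible result of StrengthenChildren(phis, varphis, \<phi>p, U, f), for some
order of iteration over the tuples.\<close>
definition strengthen_children_result ::
  "('p \<Rightarrow> 's) \<Rightarrow> ('p \<Rightarrow> 'v set) \<Rightarrow> ('f \<Rightarrow> 'p set list \<Rightarrow> 'p set) \<Rightarrow> 'p set \<Rightarrow> nat \<Rightarrow> 'f
     \<Rightarrow> 'p list \<Rightarrow> 'p set list \<Rightarrow> 'p set \<Rightarrow> 'p set list \<Rightarrow> bool" where
  "strengthen_children_result psym den absT U k f phis varphis \<phi>p res \<longleftrightarrow>
     (\<exists>L. distinct L \<and>
          set L = {\<psi>s. length \<psi>s = length phis \<and>
                      (\<forall>i<length phis. \<psi>s ! i \<in>
                          conjs k {p \<in> U. psym p = psym (phis ! i) \<and> imp den {phis ! i} {p}})} \<and>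
          res = fold (\<lambda>\<psi>s acc.
                   if (\<forall>i<length phis. imp den (acc ! i) (\<psi>s ! i)) \<and>
                      imp den (absT f (map2 (\<union>) varphis \<psi>s)) \<phi>p
                   then \<psi>s else acc)
                 L (map (\<lambda>p. {p}) phis))"

text \<open>I is a possible output of ConstructProof(\<Pi>, (ein, eout), P, U): the root gets
EvalAbstract \<and> StrengthenRoot, and each processed node's children get
EvalAbstract \<and> StrengthenChildren (each node is processed exactly once).\<close>
definition construct_proof_result ::
  "('p \<Rightarrow> 's) \<Rightarrow> ('p \<Rightarrow> 'v set) \<Rightarrow> ('s \<Rightarrow> 'v \<Rightarrow> 'p) \<Rightarrow> ('c \<Rightarrow> 'v) \<Rightarrow> ('f \<Rightarrow> 'v list \<Rightarrow> 'v)
     \<Rightarrow> ('f \<Rightarrow> 'p set list \<Rightarrow> 'p set) \<Rightarrow> 'p set \<Rightarrow> 'p set \<Rightarrow> nat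
     \<Rightarrow> ('s,'c,'f) prog \<Rightarrow> 'v \<Rightarrow> 'v \<Rightarrow> (nat list \<Rightarrow> 'p set) \<Rightarrow> bool" where
  "construct_proof_result psym den eqp cv fs absT U P k \<Pi> ein eout I \<longleftrightarrow>
     (\<exists>\<psi>. strengthen_root_result psym den U k (eqp (sym_of \<Pi>) (eval cv fs \<Pi> ein)) (- {eout})
             (evalA psym den eqp cv absT P \<Pi> ein) \<psi> \<and>
          I [] = evalA psym den eqp cv absT P \<Pi> ein \<union> \<psi>) \<and>
     (\<forall>pos s f ps. subtree \<Pi> pos = Some (App s f ps) \<longrightarrow>
        (\<exists>\<psi>s. strengthen_children_result psym den absT U k f
                  (map (\<lambda>q. eqp (sym_of q) (eval cv fs q ein)) ps)
                  (map (\<lambda>q. evalA psym den eqp cv absT P q ein) ps)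
                  (I pos) \<psi>s \<and>
               (\<forall>i<length ps. I (pos @ [i]) = evalA psym den eqp cv absT P (ps ! i) ein \<union> \<psi>s ! i)))"

end

theory Submission
  imports Defs
begin

lemma fold_mem: "fold (\<lambda>x acc. if C x acc then x else acc) L a \<in> insert a (set L)"
proof (induction L arbitrary: a)
  case Nil then show ?case by simp
next
  case (Cons y L) then show ?case by (cases "C y a") fastforce+
qed

lemma fold_inv: "R a \<Longrightarrow> (\<And>x acc. C x acc \<Longrightarrow> R x) \<Longrightarrow> R (fold (\<lambda>x acc. if C x acc then x else acc) L a)"
proof (induction L arbitrary: a)
  case Nil then show ?case by simp
next
  case (Cons y L) then show ?case by (cases "C y a") auto
qed

lemma subtree_snoc: "subtree p (pos @ [i]) = Some q \<Longrightarrow>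
   \<exists>s f ps. subtree p pos = Some (App s f ps) \<and> i < length ps \<and> ps ! i = q"
proof (induction pos arbitrary: p)
  case Nil then show ?case by (cases p) (auto split: if_splits)
next
  case (Cons j pos) then show ?case by (cases p) (auto split: if_splits)
qed

lemma gam_union: "gam den (A \<union> B) = gam den A \<inter> gam den B"
  unfolding gam_def by auto

lemma gam_single: "gam den {p} = den p" unfolding gam_def by auto

lemma alpha_sound: "v \<in> gam den \<phi> \<Longrightarrow> v \<in> gam den (alpha psym den P s \<phi>)"
  unfolding alpha_def gam_def imp_def by auto

lemma evalA_sound:
  assumes eq_preds: "\<forall>s c. den (eqp s c) = {c} \<and> psym (eqp s c) = s \<and> eqp s c \<in> U"
    and sound: "\<forall>f \<phi>s cs. length cs = length \<phi>s \<and> (\<forall>i<length cs. cs ! i \<in> gam den (\<phi>s ! i))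
                   \<longrightarrow> fs f cs \<in> gam den (absT f \<phi>s)"
  shows "eval cv fs q c \<in> gam den (evalA psym den eqp cv absT P q c)"
proof (induction q)
  case (Var s) then show ?case using eq_preds by (simp add: alpha_sound gam_single)
next
  case (Const s t) then show ?case using eq_preds by (simp add: alpha_sound gam_single)
next
  case (App s f ps)
  have "fs f (map (\<lambda>q. eval cv fs q c) ps) \<in> gam den (absT f (map (\<lambda>q. evalA psym den eqp cv absT P q c) ps))"
    using sound App by (auto simp: nth_mem)
  then show ?case by (simp add: alpha_sound)
qed

theorem mainTheorem4:
  fixes psym :: "'p \<Rightarrow> 's" and den :: "'p \<Rightarrow> 'v set" and eqp :: "'s \<Rightarrow> 'v \<Rightarrow> 'p"
    and cv :: "'c \<Rightarrow> 'v" and fs :: "'f \<Rightarrow> 'v list \<Rightarrow> 'v"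
    and absT :: "'f \<Rightarrow> 'p set list \<Rightarrow> 'p set"
    and U P :: "'p set" and k :: nat
    and G :: "('s,'c,'f) production set" and s0 :: 's
    and \<Pi> :: "('s,'c,'f) prog" and ein eout :: 'v
    and I :: "nat list \<Rightarrow> 'p set"
  assumes k: "k \<ge> 1"
    and eq_preds: "\<forall>s c. den (eqp s c) = {c} \<and> psym (eqp s c) = s \<and> eqp s c \<in> U"
    and sound: "\<forall>f \<phi>s cs. length cs = length \<phi>s \<and> (\<forall>i<length cs. cs ! i \<in> gam den (\<phi>s ! i))
                   \<longrightarrow> fs f cs \<in> gam den (absT f \<phi>s)"
    and mono: "\<forall>f \<phi>s \<phi>s'. length \<phi>s = length \<phi>s' \<and> (\<forall>i<length \<phi>s. imp den (\<phi>s ! i) (\<phi>s' ! i))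
                   \<longrightarrow> imp den (absT f \<phi>s) (absT f \<phi>s')"
    and precise: "\<forall>f ss cs s. length ss = length cs
                   \<longrightarrow> imp den (absT f (map2 (\<lambda>si ci. {eqp si ci}) ss cs)) {eqp s (fs f cs)}"
    and prog: "derives G \<Pi>" "sym_of \<Pi> = s0"
    and wrong: "eval cv fs \<Pi> ein \<noteq> eout"
    and PU: "P \<subseteq> U"
    and consistent: "eout \<in> gam den (evalA psym den eqp cv absT P \<Pi> ein)"
    and run: "construct_proof_result psym den eqp cv fs absT U P k \<Pi> ein eout I"
  shows "(\<forall>pos s. subtree \<Pi> pos = Some (Var s) \<longrightarrow> imp den {eqp s ein} (I pos))
       \<and> (\<forall>pos s t. subtree \<Pi> pos = Some (Const s t) \<longrightarrow> imp den {eqp s (cv t)} (I pos))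
       \<and> (\<forall>pos s f ps. subtree \<Pi> pos = Some (App s f ps) \<longrightarrow>
            imp den (absT f (map (\<lambda>i. I (pos @ [i])) [0..<length ps])) (I pos))
       \<and> eout \<notin> gam den (I [])"
proof -
  let ?v = "\<lambda>q. eval cv fs q ein"
  let ?EA = "\<lambda>q. evalA psym den eqp cv absT P q ein"
  have EAs: "\<And>q. ?v q \<in> gam den (?EA q)"
    by (rule evalA_sound[OF eq_preds sound])
  obtain \<psi> where root: "strengthen_root_result psym den U k (eqp (sym_of \<Pi>) (?v \<Pi>)) (- {eout}) (?EA \<Pi>) \<psi>"
     and I0: "I [] = ?EA \<Pi> \<union> \<psi>"
    using run unfolding construct_proof_result_def by blast
  have ch: "\<And>pos s f ps. subtree \<Pi> pos = Some (App s f ps) \<Longrightarrow>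
        (\<exists>\<psi>s. strengthen_children_result psym den absT U k f
                  (map (\<lambda>q. eqp (sym_of q) (?v q)) ps)
                  (map ?EA ps)
                  (I pos) \<psi>s \<and>
               (\<forall>i<length ps. I (pos @ [i]) = ?EA (ps ! i) \<union> \<psi>s ! i))"
    using run unfolding construct_proof_result_def by blast
  obtain L where L: "distinct L" "set L = conjs k {p \<in> U. psym p = psym (eqp (sym_of \<Pi>) (?v \<Pi>)) \<and> imp den {eqp (sym_of \<Pi>) (?v \<Pi>)} {p}}"
     "\<psi> = fold (\<lambda>\<psi> acc. if imp den acc \<psi> \<and> gam den (?EA \<Pi> \<union> \<psi>) \<subseteq> - {eout} then \<psi> else acc)
                     L {eqp (sym_of \<Pi>) (?v \<Pi>)}"
    using root unfolding strengthen_root_result_def by blast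
  have A: "\<And>pos q. subtree \<Pi> pos = Some q \<Longrightarrow> ?v q \<in> gam den (I pos)"
  proof -
    fix pos q assume sq: "subtree \<Pi> pos = Some q"
    show "?v q \<in> gam den (I pos)"
    proof (cases pos rule: rev_exhaust)
      case Nil
      then have q: "q = \<Pi>" using sq by simp
      have "\<psi> \<in> insert {eqp (sym_of \<Pi>) (?v \<Pi>)} (set L)"
        unfolding L(3) by (rule fold_mem)
      then have "?v \<Pi> \<in> gam den \<psi>"
        using eq_preds unfolding L(2) conjs_def by (auto simp: gam_def imp_def)
      then show ?thesis using Nil q I0 EAs by (simp add: gam_union)
    next
      case (snoc pos' i)
      then obtain s f ps where sp: "subtree \<Pi> pos' = Some (App s f ps)" "i < length ps" "ps ! i = q"
        using subtree_snoc sq by blast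
      obtain \<psi>s where r: "strengthen_children_result psym den absT U k f
                  (map (\<lambda>q. eqp (sym_of q) (?v q)) ps) (map ?EA ps) (I pos') \<psi>s"
         and Ii: "\<forall>i<length ps. I (pos' @ [i]) = ?EA (ps ! i) \<union> \<psi>s ! i"
        using ch[OF sp(1)] by blast
      let ?phis = "map (\<lambda>q. eqp (sym_of q) (?v q)) ps"
      obtain L2 where L2: "set L2 = {\<psi>s. length \<psi>s = length ?phis \<and>
                      (\<forall>i<length ?phis. \<psi>s ! i \<in>
                          conjs k {p \<in> U. psym p = psym (?phis ! i) \<and> imp den {?phis ! i} {p}})}"
          "\<psi>s = fold (\<lambda>\<psi>s acc.
                   if (\<forall>i<length ?phis. imp den (acc ! i) (\<psi>s ! i)) \<and>
                      imp den (absT f (map2 (\<union>) (map ?EA ps) \<psi>s)) (I pos')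
                   then \<psi>s else acc)
                 L2 (map (\<lambda>p. {p}) ?phis)"
        using r unfolding strengthen_children_result_def by blast
      have "\<psi>s \<in> insert (map (\<lambda>p. {p}) ?phis) (set L2)"
        unfolding L2(2) by (rule fold_mem)
      then have "?v q \<in> gam den (\<psi>s ! i)"
      proof
        assume "\<psi>s = map (\<lambda>p. {p}) ?phis"
        then show ?thesis using sp eq_preds by (simp add: gam_single)
      next
        assume "\<psi>s \<in> set L2"
        then have "\<psi>s ! i \<in> conjs k {p \<in> U. psym p = psym (?phis ! i) \<and> imp den {?phis ! i} {p}}"
          using L2(1) sp(2) by auto
        then show ?thesis using sp eq_preds unfolding conjs_def by (auto simp: gam_def imp_def)
      qed
      then show ?thesis using snoc Ii sp EAs by (simp add: gam_union)
    qed
  qed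
  have leafV: "\<forall>pos s. subtree \<Pi> pos = Some (Var s) \<longrightarrow> imp den {eqp s ein} (I pos)"
    using A eq_preds by (fastforce simp: imp_def gam_single)
  have leafC: "\<forall>pos s t. subtree \<Pi> pos = Some (Const s t) \<longrightarrow> imp den {eqp s (cv t)} (I pos)"
    using A eq_preds by (fastforce simp: imp_def gam_single)
  have final: "eout \<notin> gam den (I [])"
  proof -
    have "eout \<notin> gam den (?EA \<Pi> \<union> \<psi>)"
      unfolding L(3)
    proof (rule fold_inv[where R = "\<lambda>acc. eout \<notin> gam den (?EA \<Pi> \<union> acc)"])
      show "eout \<notin> gam den (?EA \<Pi> \<union> {eqp (sym_of \<Pi>) (?v \<Pi>)})"
        using eq_preds wrong by (simp add: gam_def)
    next
      fix x acc assume "imp den acc x \<and> gam den (?EA \<Pi> \<union> x) \<subseteq> - {eout}"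
      then show "eout \<notin> gam den (?EA \<Pi> \<union> x)" by auto
    qed
    then show ?thesis using I0 by simp
  qed
  have app: "\<forall>pos s f ps. subtree \<Pi> pos = Some (App s f ps) \<longrightarrow>
            imp den (absT f (map (\<lambda>i. I (pos @ [i])) [0..<length ps])) (I pos)"
  proof (intro allI impI)
    fix pos s f ps assume sp: "subtree \<Pi> pos = Some (App s f ps)"
    obtain \<psi>s where r: "strengthen_children_result psym den absT U k f
                  (map (\<lambda>q. eqp (sym_of q) (?v q)) ps) (map ?EA ps) (I pos) \<psi>s"
         and Ii: "\<forall>i<length ps. I (pos @ [i]) = ?EA (ps ! i) \<union> \<psi>s ! i"
      using ch[OF sp] by blast
    let ?phis = "map (\<lambda>q. eqp (sym_of q) (?v q)) ps"
    obtain L2 where L2: "set L2 = {\<psi>s. length \<psi>s = length ?phis \<and>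
                    (\<forall>i<length ?phis. \<psi>s ! i \<in>
                        conjs k {p \<in> U. psym p = psym (?phis ! i) \<and> imp den {?phis ! i} {p}})}"
        "\<psi>s = fold (\<lambda>\<psi>s acc.
                 if (\<forall>i<length ?phis. imp den (acc ! i) (\<psi>s ! i)) \<and>
                    imp den (absT f (map2 (\<union>) (map ?EA ps) \<psi>s)) (I pos)
                 then \<psi>s else acc)
               L2 (map (\<lambda>p. {p}) ?phis)"
      using r unfolding strengthen_children_result_def by blast
    have "\<psi>s \<in> insert (map (\<lambda>p. {p}) ?phis) (set L2)"
      unfolding L2(2) by (rule fold_mem)
    then have len: "length \<psi>s = length ps" using L2(1) by auto
    have init: "imp den (absT f (map2 (\<union>) (map ?EA ps) (map (\<lambda>p. {p}) ?phis))) (I pos)"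
    proof -
      let ?ss = "map sym_of ps" and ?cs = "map ?v ps"
      have m: "imp den (absT f (map2 (\<union>) (map ?EA ps) (map (\<lambda>p. {p}) ?phis)))
                       (absT f (map2 (\<lambda>si ci. {eqp si ci}) ?ss ?cs))"
        using mono by (auto simp: imp_def gam_def)
      have p: "imp den (absT f (map2 (\<lambda>si ci. {eqp si ci}) ?ss ?cs)) {eqp s (fs f ?cs)}"
        using precise by simp
      have "?v (App s f ps) \<in> gam den (I pos)" using A sp by blast
      then have q: "imp den {eqp s (fs f ?cs)} (I pos)"
        using eq_preds by (simp add: imp_def gam_single o_def)
      show ?thesis using m p q unfolding imp_def by blast
    qed
    have inv: "imp den (absT f (map2 (\<union>) (map ?EA ps) \<psi>s)) (I pos)"
      unfolding L2(2)
      by (rule fold_inv[where R = "\<lambda>acc. imp den (absT f (map2 (\<union>) (map ?EA ps) acc)) (I pos)"])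
         (use init in auto)
    have eqm: "map (\<lambda>i. I (pos @ [i])) [0..<length ps] = map2 (\<union>) (map ?EA ps) \<psi>s"
      by (rule nth_equalityI) (auto simp: len Ii)
    show "imp den (absT f (map (\<lambda>i. I (pos @ [i])) [0..<length ps])) (I pos)"
      using inv eqm by simp
  qed
  show ?thesis using leafV leafC app final by blast
qed

end
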